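(* Let the loss $f(\cdot,z)$ be convex and $\beta$-smooth for all $z\in\mathcal{Z}$, and run full-batch GD for $T$ iterations with $\eta_t=1/(2\beta)$ for all $t\in\{1,\dots,T\}$. Then $$|\epsilon_{\mathrm{gen}}|\le8\left(\frac1n+\frac{2T}{n^2}\right)\left(3\beta\,\mathbb{E}[\|W_1-W^*_S\|_2^2]+T\epsilon_{\mathbf{c}}\right),$$ and $$\epsilon_{\mathrm{excess}}\le8\left(\frac1n+\frac{2T}{n^2}\right)\left(3\beta\,\mathbb{E}[\|W_1-W^*_S\|_2^2]+T\epsilon_{\mathbf{c}}\right)+\frac{3\beta\,\mathbb{E}[\|W_1-W^*_S\|_2^2]}{T}.$$
   Context: Let $\mathcal{D}$ be a distribution on $\mathcal{Z}$ and $z_1,\dots,z_n$ i.i.d. from $\mathcal{D}$; $S=(z_1,\dots,z_n)$. The loss $f:\mathbb{R}^d\times\mathcal{Z}\to[0,\infty)$ is non-negative; $\beta$-smooth means $\|\nabla f(w,z)-\nabla f(u,z)\|_2\le\beta\|w-u\|_2$. $R(w)=\mathbb{E}_{Z\sim\mathcal{D}}[f(w,Z)]$ with minimum value $R^*=R(w^* )$, $w^*\in\arg\min_w R(w)$ (assumed to exist); $R_S(w)=\frac1n\sum_j f(w,z_j)$, $W^*_S$ a minimizer of $R_S$ (assumed to exist). Full-batch GD: from a fixed $W_1$, $W_{t+1}=W_t-\frac{\eta_t}{n}\sum_{j=1}^n\nabla f(W_t,z_j)$, $t=1,\dots,T$, output $A(S)=W_{T+1}$. Definitions: $\epsilon_{\mathrm{gen}}=\mathbb{E}[R(A(S))-R_S(A(S))]$;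 excess risk $\epsilon_{\mathrm{excess}}=\mathbb{E}[R(A(S))]-R^*$; $\epsilon_{\mathbf{c}}=\mathbb{E}[R_S(W^*_S)]$. *)

theory Defs
  imports "HOL-Probability.Probability"
begin

definition pop_risk :: "'z measure \<Rightarrow> ('a \<Rightarrow> 'z \<Rightarrow> real) \<Rightarrow> 'a \<Rightarrow> real" where
  "pop_risk D f w = (\<integral>z. f w z \<partial>D)"

text \<open>Empirical risk R_S(w) = (1/n) sum_{j} f(w, z_j); the sample S = (z_1..z_n)
  is represented as a function on indices 0..n-1.\<close>
definition emp_risk :: "nat \<Rightarrow> ('a \<Rightarrow> 'z \<Rightarrow> real) \<Rightarrow> (nat \<Rightarrow> 'z) \<Rightarrow> 'a \<Rightarrow> real" where
  "emp_risk n f S w = (\<Sum>j<n. f w (S j)) / real n"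

text \<open>Full-batch GD: gd g eta n W1 S t is the iterate W_{t+1}
  (so gd ... 0 = W_1 and the output after T steps is gd ... T = W_{T+1}).
  g is the gradient of f in its first argument; eta t is the step size at step t.\<close>
fun gd :: "('a::real_vector \<Rightarrow> 'z \<Rightarrow> 'a) \<Rightarrow> (nat \<Rightarrow> real) \<Rightarrow> nat \<Rightarrow> 'a \<Rightarrow> (nat \<Rightarrow> 'z) \<Rightarrow> nat \<Rightarrow> 'a" where
  "gd g eta n W1 S 0 = W1"
| "gd g eta n W1 S (Suc t) =
     gd g eta n W1 S t - (eta (Suc t) / real n) *\<^sub>R (\<Sum>j<n. g (gd g eta n W1 S t) (S j))"

end

theory Submission
  imports Defs
begin


lemma line_deriv:
  fixes \<phi> :: "'a::real_inner \<Rightarrow> real"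
  assumes "\<And>w. (\<phi> has_derivative (\<lambda>h. G w \<bullet> h)) (at w)"
  shows "((\<lambda>t. \<phi> (x + t *\<^sub>R d)) has_real_derivative (G (x + t *\<^sub>R d) \<bullet> d)) (at t)"
proof -
  have l: "((\<lambda>t. x + t *\<^sub>R d) has_derivative (\<lambda>s. s *\<^sub>R d)) (at t)"
    by (auto intro!: derivative_eq_intros)
  have "((\<lambda>t. \<phi> (x + t *\<^sub>R d)) has_derivative (\<lambda>s. G (x + t *\<^sub>R d) \<bullet> (s *\<^sub>R d))) (at t)"
    using has_derivative_compose[OF l assms] by simp
  then show ?thesis
    unfolding has_field_derivative_def
    by (rule has_derivative_eq_rhs) (auto simp: fun_eq_iff mult.commute)
qed

lemma descent:
  fixes \<phi> :: "'a::real_inner \<Rightarrow> real"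
  assumes d: "\<And>w. (\<phi> has_derivative (\<lambda>h. G w \<bullet> h)) (at w)"
    and L: "\<And>w u. norm (G w - G u) \<le> \<beta> * norm (w - u)"
  shows "\<phi> y \<le> \<phi> x + G x \<bullet> (y - x) + \<beta> / 2 * (norm (y - x))\<^sup>2"
proof -
  define dd where "dd = y - x"
  define \<psi> where "\<psi> t = \<phi> (x + t *\<^sub>R dd) - t * (G x \<bullet> dd) - \<beta> / 2 * t\<^sup>2 * (norm dd)\<^sup>2" for t
  have "\<psi> 1 \<le> \<psi> 0"
  proof (rule DERIV_nonpos_imp_nonincreasing[of 0 1 \<psi>])
    fix t :: real assume t: "0 \<le> t" "t \<le> 1"
    have "(\<psi> has_real_derivative (G (x + t *\<^sub>R dd) \<bullet> dd - G x \<bullet> dd - \<beta> / 2 * (2 * t) * (norm dd)\<^sup>2)) (at t)"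
    proof -
      have a: "((\<lambda>t. \<phi> (x + t *\<^sub>R dd)) has_real_derivative (G (x + t *\<^sub>R dd) \<bullet> dd)) (at t)"
        by (rule line_deriv[OF d])
      have b: "((\<lambda>t. t * (G x \<bullet> dd)) has_real_derivative (G x \<bullet> dd)) (at t)"
        by (auto intro!: derivative_eq_intros)
      have c: "((\<lambda>t. \<beta> / 2 * t\<^sup>2 * (norm dd)\<^sup>2) has_real_derivative (\<beta> / 2 * (2 * t) * (norm dd)\<^sup>2)) (at t)"
        by (auto intro!: derivative_eq_intros)
      show ?thesis unfolding \<psi>_def by (intro DERIV_diff a b c)
    qed
    moreover have "G (x + t *\<^sub>R dd) \<bullet> dd - G x \<bullet> dd - \<beta> / 2 * (2 * t) * (norm dd)\<^sup>2 \<le> 0"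
    proof -
      have "G (x + t *\<^sub>R dd) \<bullet> dd - G x \<bullet> dd = (G (x + t *\<^sub>R dd) - G x) \<bullet> dd"
        by (simp add: inner_diff_left)
      also have "\<dots> \<le> norm (G (x + t *\<^sub>R dd) - G x) * norm dd"
        by (rule norm_cauchy_schwarz)
      also have "\<dots> \<le> (\<beta> * norm (t *\<^sub>R dd)) * norm dd"
        using L[of "x + t *\<^sub>R dd" x] by (intro mult_right_mono) auto
      also have "\<dots> = \<beta> * t * (norm dd)\<^sup>2" using t by (simp add: power2_eq_square)
      finally show ?thesis by simp
    qed
    ultimately show "\<exists>y. (\<psi> has_real_derivative y) (at t) \<and> y \<le> 0" by blast
  qed (rule zero_le_one)
  then show ?thesis unfolding \<psi>_def dd_def by simp
qed

lemma convex_grad: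
  fixes \<phi> :: "'a::real_inner \<Rightarrow> real"
  assumes d: "\<And>w. (\<phi> has_derivative (\<lambda>h. G w \<bullet> h)) (at w)"
    and c: "convex_on UNIV \<phi>"
  shows "\<phi> y \<ge> \<phi> x + G x \<bullet> (y - x)"
proof -
  define dd where "dd = y - x"
  define \<psi> where "\<psi> t = \<phi> (x + t *\<^sub>R dd)" for t
  have cv: "convex_on UNIV \<psi>"
  proof (rule convex_onI)
    fix t u a :: real assume "0 < t" "t < 1" "u \<in> UNIV" "a \<in> UNIV"
    have "x + ((1 - t) * u + t * a) *\<^sub>R dd = (1 - t) *\<^sub>R (x + u *\<^sub>R dd) + t *\<^sub>R (x + a *\<^sub>R dd)"
      by (simp add: algebra_simps)
    moreover have "\<phi> ((1 - t) *\<^sub>R (x + u *\<^sub>R dd) + t *\<^sub>R (x + a *\<^sub>R dd)) \<le> (1 - t) * \<phi> (x + u *\<^sub>R dd) + t * \<phi> (x + a *\<^sub>R dd)"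
      using convex_onD[OF c, of t "x + u *\<^sub>R dd" "x + a *\<^sub>R dd"] \<open>0<t\<close> \<open>t<1\<close> by simp
    ultimately show "\<psi> ((1 - t) *\<^sub>R u + t *\<^sub>R a) \<le> (1 - t) * \<psi> u + t * \<psi> a"
      unfolding \<psi>_def by simp
  qed simp
  have "(\<psi> has_real_derivative (G (x + 0 *\<^sub>R dd) \<bullet> dd)) (at 0)"
    unfolding \<psi>_def by (rule line_deriv[OF d])
  then have "\<psi> 1 - \<psi> 0 \<ge> (G x \<bullet> dd) * (1 - 0)"
    by (intro convex_on_imp_above_tangent[OF cv]) auto
  then show ?thesis unfolding \<psi>_def dd_def by simp
qed




lemma cocoercive_aux:
  fixes h :: "'a::real_inner \<Rightarrow> real"
  assumes cvx: "\<And>x y. h y \<ge> h x + G x \<bullet> (y - x)"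
    and desc: "\<And>x y. h y \<le> h x + G x \<bullet> (y - x) + L / 2 * (norm (y - x))\<^sup>2"
    and L: "L > 0"
  shows "h y \<ge> h x + G x \<bullet> (y - x) + (norm (G y - G x))\<^sup>2 / (2 * L)"
proof -
  define \<Delta> where "\<Delta> = G y - G x"
  define u where "u = y - (1 / L) *\<^sub>R \<Delta>"
  have 1: "h u \<ge> h x + G x \<bullet> (u - x)" by (rule cvx)
  have 2: "h u \<le> h y + G y \<bullet> (u - y) + L / 2 * (norm (u - y))\<^sup>2" by (rule desc)
  have e1: "G x \<bullet> (u - x) = G x \<bullet> (y - x) - (1 / L) * (G x \<bullet> \<Delta>)"
    unfolding u_def by (simp add: inner_diff_right algebra_simps)
  have e2: "G y \<bullet> (u - y) = - (1 / L) * (G y \<bullet> \<Delta>)"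
    unfolding u_def by (simp add: inner_diff_right)
  have e3: "L / 2 * (norm (u - y))\<^sup>2 = (norm \<Delta>)\<^sup>2 / (2 * L)"
    unfolding u_def using L by (simp add: power2_eq_square field_simps)
  have e4: "G y \<bullet> \<Delta> - G x \<bullet> \<Delta> = (norm \<Delta>)\<^sup>2"
    unfolding \<Delta>_def by (simp add: power2_norm_eq_inner inner_diff_left)
  from 1 2 e1 e2 e3 have "h x + G x \<bullet> (y - x) \<le> h y - (1 / L) * (G y \<bullet> \<Delta> - G x \<bullet> \<Delta>) + (norm \<Delta>)\<^sup>2 / (2 * L)"
    by (simp add: algebra_simps)
  also have "\<dots> = h y - (norm \<Delta>)\<^sup>2 / (2 * L)"
    using L by (simp add: e4 field_simps power2_eq_square)
  finally show ?thesis unfolding \<Delta>_def by simp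
qed

lemma cocoercive:
  fixes h :: "'a::real_inner \<Rightarrow> real"
  assumes cvx: "\<And>x y. h y \<ge> h x + G x \<bullet> (y - x)"
    and desc: "\<And>x y. h y \<le> h x + G x \<bullet> (y - x) + L / 2 * (norm (y - x))\<^sup>2"
    and L: "L > 0"
  shows "(G x - G y) \<bullet> (x - y) \<ge> (norm (G x - G y))\<^sup>2 / L"
proof -
  have a: "h y \<ge> h x + G x \<bullet> (y - x) + (norm (G y - G x))\<^sup>2 / (2 * L)"
    by (rule cocoercive_aux[OF cvx desc L])
  have b: "h x \<ge> h y + G y \<bullet> (x - y) + (norm (G x - G y))\<^sup>2 / (2 * L)"
    by (rule cocoercive_aux[OF cvx desc L])
  have n: "norm (G y - G x) = norm (G x - G y)" by (rule norm_minus_commute)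
  have "(G x - G y) \<bullet> (x - y) = - (G x \<bullet> (y - x)) - G y \<bullet> (x - y)"
    by (simp add: inner_diff_left inner_diff_right algebra_simps)
  moreover have "(norm (G x - G y))\<^sup>2 / L = (norm (G x - G y))\<^sup>2 / (2 * L) + (norm (G x - G y))\<^sup>2 / (2 * L)"
    by (simp add: field_simps)
  moreover have a': "h y \<ge> h x + G x \<bullet> (y - x) + (norm (G x - G y))\<^sup>2 / (2 * L)"
    using a n by simp
  ultimately show ?thesis using b by linarith
qed

lemma nonexpansive:
  fixes h :: "'a::real_inner \<Rightarrow> real"
  assumes cvx: "\<And>x y. h y \<ge> h x + G x \<bullet> (y - x)"
    and desc: "\<And>x y. h y \<le> h x + G x \<bullet> (y - x) + L / 2 * (norm (y - x))\<^sup>2"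
    and L: "L > 0" and eta: "0 \<le> \<eta>" "\<eta> \<le> 2 / L"
  shows "norm ((x - \<eta> *\<^sub>R G x) - (y - \<eta> *\<^sub>R G y)) \<le> norm (x - y)"
proof -
  define \<Delta> where "\<Delta> = G x - G y"
  have c: "\<Delta> \<bullet> (x - y) \<ge> (norm \<Delta>)\<^sup>2 / L" unfolding \<Delta>_def by (rule cocoercive[OF cvx desc L])
  have e: "(x - \<eta> *\<^sub>R G x) - (y - \<eta> *\<^sub>R G y) = (x - y) - \<eta> *\<^sub>R \<Delta>"
    unfolding \<Delta>_def by (simp add: algebra_simps)
  have "\<And>v::'a. (norm (v - \<eta> *\<^sub>R \<Delta>))\<^sup>2 = (norm v)\<^sup>2 - 2 * \<eta> * (\<Delta> \<bullet> v) + \<eta>\<^sup>2 * (norm \<Delta>)\<^sup>2"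
    unfolding power2_norm_eq_inner by (simp add: inner_diff_left inner_diff_right inner_commute algebra_simps power2_eq_square)
  then have "(norm ((x - \<eta> *\<^sub>R G x) - (y - \<eta> *\<^sub>R G y)))\<^sup>2 = (norm (x - y))\<^sup>2 - 2 * \<eta> * (\<Delta> \<bullet> (x - y)) + \<eta>\<^sup>2 * (norm \<Delta>)\<^sup>2"
    unfolding e by blast
  also have "\<dots> \<le> (norm (x - y))\<^sup>2 - 2 * \<eta> * ((norm \<Delta>)\<^sup>2 / L) + \<eta>\<^sup>2 * (norm \<Delta>)\<^sup>2"
    using mult_left_mono[OF c, of "2 * \<eta>"] eta by simp
  also have "\<dots> = (norm (x - y))\<^sup>2 - \<eta> * (2 / L - \<eta>) * (norm \<Delta>)\<^sup>2"
    by (simp add: algebra_simps power2_eq_square)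
  also have "\<dots> \<le> (norm (x - y))\<^sup>2"
    using eta by (simp add: mult_nonneg_nonneg)
  finally show ?thesis by (simp add: power_mono_iff)
qed

lemma sum_desc:
  fixes F :: "'j \<Rightarrow> 'a::real_inner \<Rightarrow> real"
  assumes "\<And>j x y. j \<in> J \<Longrightarrow> F j y \<le> F j x + Gr j x \<bullet> (y - x) + \<beta> / 2 * (norm (y - x))\<^sup>2"
    and "\<And>j. j \<in> J \<Longrightarrow> c j \<ge> 0" and "sum c J \<le> 1" and "\<beta> \<ge> 0"
  shows "(\<Sum>j\<in>J. c j * F j y) \<le> (\<Sum>j\<in>J. c j * F j x) + (\<Sum>j\<in>J. c j *\<^sub>R Gr j x) \<bullet> (y - x) + \<beta> / 2 * (norm (y - x))\<^sup>2"
proof -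
  have "(\<Sum>j\<in>J. c j * F j y) \<le> (\<Sum>j\<in>J. c j * (F j x + Gr j x \<bullet> (y - x) + \<beta> / 2 * (norm (y - x))\<^sup>2))"
    using assms by (intro sum_mono mult_left_mono) auto
  also have "\<dots> = (\<Sum>j\<in>J. c j * F j x + (c j *\<^sub>R Gr j x) \<bullet> (y - x) + c j * (\<beta> / 2 * (norm (y - x))\<^sup>2))"
    by (simp add: distrib_left)
  also have "\<dots> = (\<Sum>j\<in>J. c j * F j x) + (\<Sum>j\<in>J. c j *\<^sub>R Gr j x) \<bullet> (y - x) + sum c J * (\<beta> / 2 * (norm (y - x))\<^sup>2)"
    by (simp only: sum.distrib inner_sum_left sum_distrib_right)
  also have "\<dots> \<le> (\<Sum>j\<in>J. c j * F j x) + (\<Sum>j\<in>J. c j *\<^sub>R Gr j x) \<bullet> (y - x) + 1 * (\<beta> / 2 * (norm (y - x))\<^sup>2)"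
    using assms by (intro add_left_mono mult_right_mono) auto
  finally show ?thesis by simp
qed

lemma sum_cvx:
  fixes F :: "'j \<Rightarrow> 'a::real_inner \<Rightarrow> real"
  assumes "\<And>j x y. j \<in> J \<Longrightarrow> F j y \<ge> F j x + Gr j x \<bullet> (y - x)"
    and "\<And>j. j \<in> J \<Longrightarrow> c j \<ge> 0"
  shows "(\<Sum>j\<in>J. c j * F j y) \<ge> (\<Sum>j\<in>J. c j * F j x) + (\<Sum>j\<in>J. c j *\<^sub>R Gr j x) \<bullet> (y - x)"
proof -
  have "(\<Sum>j\<in>J. c j * F j y) \<ge> (\<Sum>j\<in>J. c j * (F j x + Gr j x \<bullet> (y - x)))"
    using assms by (intro sum_mono mult_left_mono) auto
  moreover have "(\<Sum>j\<in>J. c j * (F j x + Gr j x \<bullet> (y - x))) = (\<Sum>j\<in>J. c j * F j x + (c j *\<^sub>R Gr j x) \<bullet> (y - x))"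
    by (simp add: distrib_left)
  moreover have "\<dots> = (\<Sum>j\<in>J. c j * F j x) + (\<Sum>j\<in>J. c j *\<^sub>R Gr j x) \<bullet> (y - x)"
    by (simp only: sum.distrib inner_sum_left)
  ultimately show ?thesis by simp
qed

lemma selfbound:
  fixes \<phi> :: "'a::real_inner \<Rightarrow> real"
  assumes desc: "\<And>x y. \<phi> y \<le> \<phi> x + G x \<bullet> (y - x) + \<beta> / 2 * (norm (y - x))\<^sup>2"
    and nn: "\<And>x. \<phi> x \<ge> 0" and b: "\<beta> > 0"
  shows "(norm (G x))\<^sup>2 \<le> 2 * \<beta> * \<phi> x"
proof -
  have "0 \<le> \<phi> (x - (1 / \<beta>) *\<^sub>R G x)" by (rule nn)
  also have "\<dots> \<le> \<phi> x + G x \<bullet> (- (1 / \<beta>) *\<^sub>R G x) + \<beta> / 2 * (norm (- (1 / \<beta>) *\<^sub>R G x))\<^sup>2"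
    using desc[where x=x and y="x - (1 / \<beta>) *\<^sub>R G x"] by simp
  also have "\<dots> = \<phi> x - (norm (G x))\<^sup>2 / (2 * \<beta>)"
    using b unfolding power2_norm_eq_inner by (simp add: power2_eq_square field_simps)
  finally show ?thesis using b by (simp add: field_simps)
qed




locale gdproc =
  fixes R :: "'a::real_inner \<Rightarrow> real" and GR :: "'a \<Rightarrow> 'a" and \<beta> :: real and x :: "nat \<Rightarrow> 'a" and wst :: 'a
  assumes cvx: "\<And>u v. R v \<ge> R u + GR u \<bullet> (v - u)"
    and desc: "\<And>u v. R v \<le> R u + GR u \<bullet> (v - u) + \<beta> / 2 * (norm (v - u))\<^sup>2"
    and beta: "\<beta> > 0"
    and step: "\<And>k. x (Suc k) = x k - (1 / (2 * \<beta>)) *\<^sub>R GR (x k)"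
    and wmin: "\<And>w. R wst \<le> R w"
begin

lemma desc_step: "R (x (Suc k)) \<le> R (x k) - 3 / (8 * \<beta>) * (norm (GR (x k)))\<^sup>2"
proof -
  have "R (x (Suc k)) \<le> R (x k) + GR (x k) \<bullet> (x (Suc k) - x k) + \<beta> / 2 * (norm (x (Suc k) - x k))\<^sup>2"
    by (rule desc)
  also have "\<dots> = R (x k) - 3 / (8 * \<beta>) * (norm (GR (x k)))\<^sup>2"
    using beta unfolding step power2_norm_eq_inner by (simp add: power2_eq_square field_simps)
  finally show ?thesis .
qed

lemma mono_step: "R (x (Suc k)) \<le> R (x k)"
  using desc_step[of k] beta by (smt (verit) divide_nonneg_nonneg zero_le_power2 mult_nonneg_nonneg)

lemma one_step: "R (x (Suc k)) - R wst \<le> \<beta> * ((norm (x k - wst))\<^sup>2 - (norm (x (Suc k) - wst))\<^sup>2)"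
proof -
  define G where "G = GR (x k)"
  define v where "v = x k - wst"
  have c: "R (x k) - R wst \<le> G \<bullet> v"
    using cvx[of "x k" wst] unfolding G_def v_def by (simp add: inner_diff_right)
  have d: "R (x (Suc k)) \<le> R (x k) - 3 / (8 * \<beta>) * (norm G)\<^sup>2" unfolding G_def by (rule desc_step)
  have e: "x (Suc k) - wst = v - (1 / (2 * \<beta>)) *\<^sub>R G" unfolding step G_def v_def by simp
  have n: "(norm (v - (1 / (2 * \<beta>)) *\<^sub>R G))\<^sup>2 = (norm v)\<^sup>2 - 2 * (1 / (2 * \<beta>)) * (G \<bullet> v) + (1 / (2 * \<beta>))\<^sup>2 * (norm G)\<^sup>2"
    unfolding power2_norm_eq_inner by (simp add: inner_diff_left inner_diff_right inner_commute algebra_simps power2_eq_square)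
  have "\<beta> * ((norm v)\<^sup>2 - (norm (v - (1 / (2 * \<beta>)) *\<^sub>R G))\<^sup>2) = G \<bullet> v - (1 / (4 * \<beta>)) * (norm G)\<^sup>2"
    unfolding n using beta by (simp add: field_simps power2_eq_square)
  moreover have "(1 / (4 * \<beta>)) * (norm G)\<^sup>2 \<le> 3 / (8 * \<beta>) * (norm G)\<^sup>2"
    using beta by (intro mult_right_mono) (auto simp: field_simps)
  ultimately show ?thesis using c d unfolding e v_def[symmetric] by linarith
qed

lemma telescope: "(\<Sum>k<T. R (x (Suc k)) - R wst) \<le> \<beta> * (norm (x 0 - wst))\<^sup>2"
proof -
  have "(\<Sum>k<T. R (x (Suc k)) - R wst) \<le> (\<Sum>k<T. \<beta> * ((norm (x k - wst))\<^sup>2 - (norm (x (Suc k) - wst))\<^sup>2))"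
    by (intro sum_mono one_step)
  also have "\<dots> = \<beta> * ((norm (x 0 - wst))\<^sup>2 - (norm (x T - wst))\<^sup>2)"
    using sum_lessThan_telescope'[of "\<lambda>k. (norm (x k - wst))\<^sup>2" T] by (simp add: sum_distrib_left[symmetric])
  also have "\<dots> \<le> \<beta> * (norm (x 0 - wst))\<^sup>2" using beta by simp
  finally show ?thesis .
qed

lemma mono_le: "k \<le> m \<Longrightarrow> R (x m) \<le> R (x k)"
proof (induction m)
  case (Suc m) then show ?case using mono_step[of m] by (cases "k = Suc m") auto
qed simp

lemma last_bound: "real T * (R (x T) - R wst) \<le> \<beta> * (norm (x 0 - wst))\<^sup>2"
proof -
  have "real T * (R (x T) - R wst) = (\<Sum>k<T. R (x T) - R wst)" by simp
  also have "\<dots> \<le> (\<Sum>k<T. R (x (Suc k)) - R wst)"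
    by (intro sum_mono) (use mono_le in auto)
  also have "\<dots> \<le> \<beta> * (norm (x 0 - wst))\<^sup>2" by (rule telescope)
  finally show ?thesis .
qed

lemma grad_zero: "GR wst = 0"
proof -
  have "R wst \<le> R (wst - (1 / \<beta>) *\<^sub>R GR wst)" by (rule wmin)
  also have "\<dots> \<le> R wst + GR wst \<bullet> (- (1 / \<beta>) *\<^sub>R GR wst) + \<beta> / 2 * (norm (- (1 / \<beta>) *\<^sub>R GR wst))\<^sup>2"
    using desc[where u=wst and v="wst - (1 / \<beta>) *\<^sub>R GR wst"] by simp
  also have "\<dots> = R wst - (norm (GR wst))\<^sup>2 / (2 * \<beta>)"
    using beta unfolding power2_norm_eq_inner by (simp add: power2_eq_square field_simps)
  finally have "(norm (GR wst))\<^sup>2 / (2 * \<beta>) \<le> 0" by simp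
  then have "(norm (GR wst))\<^sup>2 \<le> 0" using beta by (simp add: divide_le_0_iff)
  then show ?thesis by simp
qed

lemma first_bound: "R (x 0) - R wst \<le> \<beta> / 2 * (norm (x 0 - wst))\<^sup>2"
  using desc[where u=wst and v="x 0"] grad_zero by simp

lemma sum_bound:
  assumes "T \<ge> 1"
  shows "(\<Sum>k<T. R (x k)) \<le> real T * R wst + 3 / 2 * \<beta> * (norm (x 0 - wst))\<^sup>2"
proof -
  obtain m where T: "T = Suc m" using assms by (cases T) auto
  have "(\<Sum>k<T. R (x k)) = R (x 0) + (\<Sum>k<m. R (x (Suc k)))"
    unfolding T by (rule sum.lessThan_Suc_shift)
  also have "(\<Sum>k<m. R (x (Suc k))) = (\<Sum>k<m. R (x (Suc k)) - R wst) + real m * R wst"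
    by (simp add: sum_subtractf)
  finally have "(\<Sum>k<T. R (x k)) = R (x 0) + (\<Sum>k<m. R (x (Suc k)) - R wst) + real m * R wst" by simp
  moreover have "(\<Sum>k<m. R (x (Suc k)) - R wst) \<le> \<beta> * (norm (x 0 - wst))\<^sup>2" by (rule telescope)
  moreover note first_bound
  ultimately show ?thesis unfolding T by (simp add: algebra_simps)
qed

end




lemma tri3:
  fixes A :: "'a::real_normed_vector"
  shows "norm ((A - a) - (B - b)) \<le> norm (A - B) + norm a + norm b"
proof -
  have e: "(A - a) - (B - b) = (A - B) + (b - a)" by (simp add: algebra_simps)
  have "norm ((A - B) + (b - a)) \<le> norm (A - B) + norm (b - a)" by (rule norm_triangle_ineq)
  moreover have "norm (b - a) \<le> norm b + norm a" by (rule norm_triangle_ineq4)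
  ultimately show ?thesis unfolding e by simp
qed

locale setting =
  fixes f :: "'a::euclidean_space \<Rightarrow> 'z \<Rightarrow> real" and g :: "'a \<Rightarrow> 'z \<Rightarrow> 'a"
    and \<beta> :: real and n :: nat and Z :: "'z set" and W1 :: 'a
  assumes n: "n > 0" and beta: "\<beta> > 0"
    and nonneg: "\<And>w z. z \<in> Z \<Longrightarrow> f w z \<ge> 0"
    and grad: "\<And>w z. z \<in> Z \<Longrightarrow> ((\<lambda>v. f v z) has_derivative (\<lambda>h. g w z \<bullet> h)) (at w)"
    and convex: "\<And>z. z \<in> Z \<Longrightarrow> convex_on UNIV (\<lambda>w. f w z)"
    and smooth: "\<And>w u z. z \<in> Z \<Longrightarrow> norm (g w z - g u z) \<le> \<beta> * norm (w - u)"
begin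

abbreviation "gdS S k \<equiv> gd g (\<lambda>_. 1 / (2 * \<beta>)) n W1 S k"

lemma descF: "z \<in> Z \<Longrightarrow> f y z \<le> f x z + g x z \<bullet> (y - x) + \<beta> / 2 * (norm (y - x))\<^sup>2"
  using descent[of "\<lambda>v. f v z" "\<lambda>w. g w z"] grad smooth by blast

lemma cvxF: "z \<in> Z \<Longrightarrow> f y z \<ge> f x z + g x z \<bullet> (y - x)"
  using convex_grad[of "\<lambda>v. f v z" "\<lambda>w. g w z"] grad convex by blast

lemma selfF: "z \<in> Z \<Longrightarrow> (norm (g w z))\<^sup>2 \<le> 2 * \<beta> * f w z"
  using selfbound[of "\<lambda>v. f v z" "\<lambda>w. g w z" \<beta>] descF nonneg beta by blast

lemma gd_step: "gdS S (Suc k) = gdS S k - (1 / (2 * \<beta>)) *\<^sub>R ((1 / real n) *\<^sub>R (\<Sum>j<n. g (gdS S k) (S j)))"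
  by simp

lemma emp_eq: "emp_risk n f S w = (\<Sum>j<n. (1 / real n) * f w (S j))"
  unfolding emp_risk_def by (simp add: sum_divide_distrib)

lemma gdproc_S:
  assumes S: "\<And>j. j < n \<Longrightarrow> S j \<in> Z" and wmin: "\<And>w. emp_risk n f S wst \<le> emp_risk n f S w"
  shows "gdproc (emp_risk n f S) (\<lambda>w. (\<Sum>j<n. (1 / real n) *\<^sub>R g w (S j))) \<beta> (gdS S) wst"
proof
  fix u v
  show "emp_risk n f S v \<ge> emp_risk n f S u + (\<Sum>j<n. (1 / real n) *\<^sub>R g u (S j)) \<bullet> (v - u)"
    unfolding emp_eq by (rule sum_cvx) (use S cvxF in auto)
  show "emp_risk n f S v \<le> emp_risk n f S u + (\<Sum>j<n. (1 / real n) *\<^sub>R g u (S j)) \<bullet> (v - u) + \<beta> / 2 * (norm (v - u))\<^sup>2"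
    unfolding emp_eq by (rule sum_desc) (use S descF beta n in auto)
next
  fix k
  show "gdS S (Suc k) = gdS S k - (1 / (2 * \<beta>)) *\<^sub>R (\<Sum>j<n. (1 / real n) *\<^sub>R g (gdS S k) (S j))"
    by (simp add: scaleR_sum_right)
qed (use beta wmin in auto)

lemma stab_delta:
  assumes S: "\<And>j. j < n \<Longrightarrow> S j \<in> Z" and S': "\<And>j. j < n \<Longrightarrow> S' j \<in> Z"
    and i: "i < n" and same: "\<And>j. j < n \<Longrightarrow> j \<noteq> i \<Longrightarrow> S' j = S j"
  shows "norm (gdS S k - gdS S' k) \<le> (1 / (2 * \<beta> * real n)) * (\<Sum>t<k. norm (g (gdS S t) (S i)) + norm (g (gdS S' t) (S' i)))"
proof (induction k)
  case 0 then show ?case by simp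
next
  case (Suc k)
  define J where "J = {..<n} - {i}"
  define \<eta> where "\<eta> = 1 / (2 * \<beta>)"
  define G where "G w = (\<Sum>j\<in>J. (1 / real n) *\<^sub>R g w (S j))" for w
  define h where "h w = (\<Sum>j\<in>J. (1 / real n) * f w (S j))" for w
  have J: "finite J" "i \<notin> J" "{..<n} = insert i J" using i unfolding J_def by auto
  have G': "(\<Sum>j\<in>J. (1 / real n) *\<^sub>R g w (S' j)) = G w" for w
    unfolding G_def using same unfolding J_def by (intro sum.cong) auto
  have sp: "(1 / real n) *\<^sub>R (\<Sum>j<n. g w (T j)) = (1 / real n) *\<^sub>R g w (T i) + (\<Sum>j\<in>J. (1 / real n) *\<^sub>R g w (T j))" for w and T :: "nat \<Rightarrow> 'z"
    unfolding J(3) using J(1,2) by (simp add: scaleR_sum_right scaleR_right_distrib)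
  have x: "gdS S (Suc k) = (gdS S k - \<eta> *\<^sub>R G (gdS S k)) - (\<eta> / real n) *\<^sub>R g (gdS S k) (S i)"
    unfolding gd_step \<eta>_def sp G_def by (simp add: algebra_simps)
  have y: "gdS S' (Suc k) = (gdS S' k - \<eta> *\<^sub>R G (gdS S' k)) - (\<eta> / real n) *\<^sub>R g (gdS S' k) (S' i)"
    unfolding gd_step \<eta>_def sp G' by (simp add: algebra_simps)
  have JZ: "j \<in> J \<Longrightarrow> S j \<in> Z" for j using S unfolding J_def by auto
  have ne: "norm ((gdS S k - \<eta> *\<^sub>R G (gdS S k)) - (gdS S' k - \<eta> *\<^sub>R G (gdS S' k))) \<le> norm (gdS S k - gdS S' k)"
  proof (rule nonexpansive[where h = h and L = \<beta>])
    fix u v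
    show "h v \<ge> h u + G u \<bullet> (v - u)" unfolding h_def G_def by (rule sum_cvx) (use JZ cvxF in auto)
    have "sum (\<lambda>_. 1 / real n) J \<le> 1"
    proof -
      have "card J \<le> n" unfolding J_def by (metis card_Diff1_le card_lessThan finite_lessThan)
      then show ?thesis using n by (simp add: field_simps)
    qed
    then show "h v \<le> h u + G u \<bullet> (v - u) + \<beta> / 2 * (norm (v - u))\<^sup>2"
      unfolding h_def G_def by (intro sum_desc) (use JZ descF beta in auto)
  qed (use beta in \<open>auto simp: \<eta>_def field_simps\<close>)
  have "norm (gdS S (Suc k) - gdS S' (Suc k)) \<le> norm ((gdS S k - \<eta> *\<^sub>R G (gdS S k)) - (gdS S' k - \<eta> *\<^sub>R G (gdS S' k)))
      + norm ((\<eta> / real n) *\<^sub>R g (gdS S k) (S i)) + norm ((\<eta> / real n) *\<^sub>R g (gdS S' k) (S' i))"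
    unfolding x y by (rule tri3)
  also have "\<dots> \<le> norm (gdS S k - gdS S' k) + (\<eta> / real n) * (norm (g (gdS S k) (S i)) + norm (g (gdS S' k) (S' i)))"
    using ne beta n by (simp add: \<eta>_def distrib_left)
  also have "\<dots> \<le> (1 / (2 * \<beta> * real n)) * (\<Sum>t<Suc k. norm (g (gdS S t) (S i)) + norm (g (gdS S' t) (S' i)))"
    using Suc.IH by (simp add: \<eta>_def distrib_left)
  finally show ?case .
qed

end




context setting begin

lemma stab_pointwise:
  assumes S: "\<And>j. j < n \<Longrightarrow> S j \<in> Z" and S': "\<And>j. j < n \<Longrightarrow> S' j \<in> Z"
    and i: "i < n" and same: "\<And>j. j < n \<Longrightarrow> j \<noteq> i \<Longrightarrow> S' j = S j"
  shows "\<bar>f (gdS S' T) (S i) - f (gdS S T) (S i)\<bar> \<le>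
     (1 / real n) * (real T * f (gdS S T) (S i) + (1/2) * (\<Sum>k<T. f (gdS S k) (S i) + f (gdS S' k) (S' i)))
     + (real T / (2 * (real n)\<^sup>2)) * (\<Sum>k<T. f (gdS S k) (S i) + f (gdS S' k) (S' i))"
proof -
  define a where "a k = norm (g (gdS S k) (S i))" for k
  define b where "b k = norm (g (gdS S' k) (S' i))" for k
  define F where "F k = f (gdS S k) (S i)" for k
  define F' where "F' k = f (gdS S' k) (S' i)" for k
  define \<delta> where "\<delta> = norm (gdS S' T - gdS S T)"
  define \<Sigma>c where "\<Sigma>c = (\<Sum>k<T. a k + b k)"
  define \<Sigma>F where "\<Sigma>F = (\<Sum>k<T. F k + F' k)"
  have Si: "S i \<in> Z" and S'i: "S' i \<in> Z" using S S' i by auto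
  have a2: "(a k)\<^sup>2 \<le> 2 * \<beta> * F k" for k unfolding a_def F_def by (rule selfF[OF Si])
  have b2: "(b k)\<^sup>2 \<le> 2 * \<beta> * F' k" for k unfolding b_def F'_def by (rule selfF[OF S'i])
  have a0: "a k \<ge> 0" "b k \<ge> 0" for k unfolding a_def b_def by auto
  have F0: "F k \<ge> 0" "F' k \<ge> 0" for k unfolding F_def F'_def using nonneg Si S'i by auto
  have \<delta>0: "\<delta> \<ge> 0" unfolding \<delta>_def by simp
  have \<delta>: "\<delta> \<le> \<Sigma>c / (2 * \<beta> * real n)"
    using stab_delta[OF S S' i same, where k=T] unfolding \<delta>_def \<Sigma>c_def a_def b_def
    by (simp add: norm_minus_commute)
  have up: "f (gdS S' T) (S i) \<le> F T + a T * \<delta> + \<beta> / 2 * \<delta>\<^sup>2"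
  proof -
    have "f (gdS S' T) (S i) \<le> F T + g (gdS S T) (S i) \<bullet> (gdS S' T - gdS S T) + \<beta> / 2 * \<delta>\<^sup>2"
      unfolding F_def \<delta>_def by (rule descF[OF Si])
    moreover have "g (gdS S T) (S i) \<bullet> (gdS S' T - gdS S T) \<le> a T * \<delta>"
      unfolding a_def \<delta>_def by (rule norm_cauchy_schwarz)
    ultimately show ?thesis by simp
  qed
  have lo: "f (gdS S' T) (S i) \<ge> F T - a T * \<delta>"
  proof -
    have "f (gdS S' T) (S i) \<ge> F T + g (gdS S T) (S i) \<bullet> (gdS S' T - gdS S T)"
      unfolding F_def by (rule cvxF[OF Si])
    moreover have "- (g (gdS S T) (S i) \<bullet> (gdS S' T - gdS S T)) \<le> a T * \<delta>"
      unfolding a_def \<delta>_def by (metis Cauchy_Schwarz_ineq2 abs_le_D2 )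
    ultimately show ?thesis by simp
  qed
  have abs: "\<bar>f (gdS S' T) (S i) - F T\<bar> \<le> a T * \<delta> + \<beta> / 2 * \<delta>\<^sup>2"
  proof -
    have "\<beta> / 2 * \<delta>\<^sup>2 \<ge> 0" using beta by simp
    then show ?thesis using up lo by (simp add: abs_le_iff)
  qed
  have pt: "a T * (a k + b k) \<le> 2 * \<beta> * F T + \<beta> * (F k + F' k)" for k
  proof -
    have h1: "a T * (a k + b k) \<le> (a T)\<^sup>2 + (a k + b k)\<^sup>2 / 4"
      using sum_squares_ge_zero[of "a T - (a k + b k) / 2" 0] by (simp add: power2_eq_square algebra_simps)
    have h2: "(a k + b k)\<^sup>2 \<le> 2 * ((a k)\<^sup>2 + (b k)\<^sup>2)"
      using sum_squares_ge_zero[of "a k - b k" 0] by (simp add: power2_eq_square algebra_simps)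
    have e: "\<beta> * (F k + F' k) = \<beta> * F k + \<beta> * F' k" by (simp add: algebra_simps)
    have "(a T)\<^sup>2 \<le> 2 * (\<beta> * F T)" "(a k)\<^sup>2 \<le> 2 * (\<beta> * F k)" "(b k)\<^sup>2 \<le> 2 * (\<beta> * F' k)"
      using a2[of T] a2[of k] b2[of k] by (simp_all add: mult.assoc)
    then show ?thesis unfolding e using h1 h2 by (simp add: mult.assoc)
  qed
  have t1: "a T * \<delta> \<le> (1 / real n) * (real T * F T + (1/2) * \<Sigma>F)"
  proof -
    have c1: "a T * \<delta> \<le> a T * (\<Sigma>c / (2 * \<beta> * real n))" using \<delta> a0 by (intro mult_left_mono) auto
    have "a T * \<Sigma>c = (\<Sum>k<T. a T * (a k + b k))" unfolding \<Sigma>c_def by (simp add: sum_distrib_left)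
    also have "\<dots> \<le> (\<Sum>k<T. 2 * \<beta> * F T + \<beta> * (F k + F' k))" by (intro sum_mono pt)
    also have "\<dots> = 2 * \<beta> * (real T * F T + (1/2) * \<Sigma>F)"
    proof -
      have "(\<Sum>k<T. 2 * \<beta> * F T + \<beta> * (F k + F' k)) = real T * (2 * \<beta> * F T) + \<beta> * \<Sigma>F"
        unfolding \<Sigma>F_def by (simp add: sum.distrib sum_distrib_left[symmetric])
      then show ?thesis by (simp add: algebra_simps)
    qed
    finally have c2: "a T * \<Sigma>c \<le> 2 * \<beta> * (real T * F T + (1/2) * \<Sigma>F)" .
    have "a T * (\<Sigma>c / (2 * \<beta> * real n)) = (a T * \<Sigma>c) / (2 * \<beta> * real n)" by simp
    also have "\<dots> \<le> 2 * \<beta> * (real T * F T + (1/2) * \<Sigma>F) / (2 * \<beta> * real n)"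
      using c2 beta n by (intro divide_right_mono) auto
    also have "\<dots> = (1 / real n) * (real T * F T + (1/2) * \<Sigma>F)" using beta n by (simp add: field_simps)
    finally show ?thesis using c1 by linarith
  qed
  have t2: "\<beta> / 2 * \<delta>\<^sup>2 \<le> (real T / (2 * (real n)\<^sup>2)) * \<Sigma>F"
  proof -
    have "\<Sigma>c\<^sup>2 \<le> (\<Sum>k<T. (a k + b k)\<^sup>2) * real T"
      unfolding \<Sigma>c_def using sum_squared_le_sum_of_squares[of "\<lambda>k. a k + b k" "{..<T}"] by simp
    also have "(\<Sum>k<T. (a k + b k)\<^sup>2) \<le> (\<Sum>k<T. 4 * \<beta> * (F k + F' k))"
    proof (intro sum_mono)
      fix k
      have "(a k + b k)\<^sup>2 \<le> 2 * ((a k)\<^sup>2 + (b k)\<^sup>2)"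
        using sum_squares_ge_zero[of "a k - b k" 0] by (simp add: power2_eq_square algebra_simps)
      then show "(a k + b k)\<^sup>2 \<le> 4 * \<beta> * (F k + F' k)" using a2[of k] b2[of k] by (simp add: algebra_simps)
    qed
    then have "(\<Sum>k<T. (a k + b k)\<^sup>2) * real T \<le> (\<Sum>k<T. 4 * \<beta> * (F k + F' k)) * real T"
      by (intro mult_right_mono) auto
    also have "\<dots> = 4 * \<beta> * real T * \<Sigma>F"
    proof -
      have "(\<Sum>k<T. 4 * \<beta> * (F k + F' k)) = 4 * \<beta> * \<Sigma>F" unfolding \<Sigma>F_def by (rule sum_distrib_left[symmetric])
      then show ?thesis by simp
    qed
    finally have sc: "\<Sigma>c\<^sup>2 \<le> 4 * \<beta> * real T * \<Sigma>F" .
    have "\<delta>\<^sup>2 \<le> (\<Sigma>c / (2 * \<beta> * real n))\<^sup>2" using \<delta> \<delta>0 by (intro power_mono) auto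
    also have "\<dots> = \<Sigma>c\<^sup>2 / (4 * \<beta>\<^sup>2 * (real n)\<^sup>2)" by (simp add: power_divide power_mult_distrib)
    also have "\<dots> \<le> 4 * \<beta> * real T * \<Sigma>F / (4 * \<beta>\<^sup>2 * (real n)\<^sup>2)"
      using sc beta n by (intro divide_right_mono) auto
    finally have "\<beta> / 2 * \<delta>\<^sup>2 \<le> \<beta> / 2 * (4 * \<beta> * real T * \<Sigma>F / (4 * \<beta>\<^sup>2 * (real n)\<^sup>2))"
      using beta by (intro mult_left_mono) auto
    also have "\<dots> = (real T / (2 * (real n)\<^sup>2)) * \<Sigma>F" using beta n by (simp add: field_simps power2_eq_square)
    finally show ?thesis .
  qed
  show ?thesis using abs t1 t2 unfolding F_def F'_def \<Sigma>F_def by linarith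
qed

end




definition qround :: "nat \<Rightarrow> 'a::euclidean_space \<Rightarrow> 'a" where
  "qround k w = (\<Sum>b\<in>Basis. (of_int \<lfloor>real (Suc k) * (w \<bullet> b)\<rfloor> / real (Suc k)) *\<^sub>R b)"

lemma floor_div_tendsto: "(\<lambda>k. of_int \<lfloor>real (Suc k) * x\<rfloor> / real (Suc k)) \<longlonglongrightarrow> (x::real)"
proof (rule tendsto_sandwich[where f = "\<lambda>k. x - 1 / real (Suc k)" and h = "\<lambda>k. x"])
  show "\<forall>\<^sub>F k in sequentially. x - 1 / real (Suc k) \<le> of_int \<lfloor>real (Suc k) * x\<rfloor> / real (Suc k)"
  proof (intro always_eventually allI)
    fix k
    have "x - 1 / real (Suc k) = (real (Suc k) * x - 1) / real (Suc k)" by (simp add: field_simps)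
    also have "\<dots> \<le> of_int \<lfloor>real (Suc k) * x\<rfloor> / real (Suc k)"
      by (rule divide_right_mono) (linarith, simp)
    finally show "x - 1 / real (Suc k) \<le> of_int \<lfloor>real (Suc k) * x\<rfloor> / real (Suc k)" .
  qed
  show "\<forall>\<^sub>F k in sequentially. of_int \<lfloor>real (Suc k) * x\<rfloor> / real (Suc k) \<le> x"
  proof (intro always_eventually allI)
    fix k
    have "of_int \<lfloor>real (Suc k) * x\<rfloor> / real (Suc k) \<le> (real (Suc k) * x) / real (Suc k)"
      by (rule divide_right_mono) (linarith, simp)
    then show "of_int \<lfloor>real (Suc k) * x\<rfloor> / real (Suc k) \<le> x" by simp
  qed
  have "(\<lambda>k. 1 / real (Suc k)) \<longlonglongrightarrow> 0" by (rule LIMSEQ_inverse_real_of_nat[unfolded inverse_eq_divide])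
  then show "(\<lambda>k. x - 1 / real (Suc k)) \<longlonglongrightarrow> x" using tendsto_diff[of "\<lambda>_. x" x sequentially] by force
qed simp

lemma qround_tendsto: "(\<lambda>k. qround k w) \<longlonglongrightarrow> (w::'a::euclidean_space)"
proof -
  have "(\<lambda>k. qround k w) \<longlonglongrightarrow> (\<Sum>b\<in>Basis. (w \<bullet> b) *\<^sub>R b)"
    unfolding qround_def by (intro tendsto_sum tendsto_scaleR floor_div_tendsto tendsto_const)
  then show ?thesis by (simp add: euclidean_representation)
qed

lemma qround_meas_count:
  fixes w :: "'m \<Rightarrow> 'a::euclidean_space"
  assumes [measurable]: "w \<in> borel_measurable M"
  shows "(\<lambda>x. restrict (\<lambda>b. \<lfloor>real (Suc k) * (w x \<bullet> b)\<rfloor>) Basis) \<in> measurable M (count_space (Pi\<^sub>E Basis (\<lambda>_. UNIV)))"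
proof (subst measurable_count_space_eq_countable)
  show "countable (Pi\<^sub>E (Basis::'a set) (\<lambda>_. UNIV :: int set))" by (intro countable_PiE) auto
  show "(\<lambda>x. restrict (\<lambda>b. \<lfloor>real (Suc k) * (w x \<bullet> b)\<rfloor>) Basis) \<in> space M \<rightarrow> Pi\<^sub>E Basis (\<lambda>_. UNIV) \<and>
    (\<forall>a\<in>Pi\<^sub>E Basis (\<lambda>_. UNIV). (\<lambda>x. restrict (\<lambda>b. \<lfloor>real (Suc k) * (w x \<bullet> b)\<rfloor>) Basis) -` {a} \<inter> space M \<in> sets M)"
  proof safe
    fix a :: "'a \<Rightarrow> int" assume a: "a \<in> Pi\<^sub>E Basis (\<lambda>_. UNIV)"
    have "(\<lambda>x. restrict (\<lambda>b. \<lfloor>real (Suc k) * (w x \<bullet> b)\<rfloor>) Basis) -` {a} \<inter> space M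
        = {x \<in> space M. \<forall>b\<in>Basis. \<lfloor>real (Suc k) * (w x \<bullet> b)\<rfloor> = a b}"
      using a by (auto simp: fun_eq_iff restrict_def PiE_def extensional_def)
    also have "\<dots> \<in> sets M" by measurable
    finally show "(\<lambda>x. restrict (\<lambda>b. \<lfloor>real (Suc k) * (w x \<bullet> b)\<rfloor>) Basis) -` {a} \<inter> space M \<in> sets M" .
  qed auto
qed

lemma carath:
  fixes H :: "'a::euclidean_space \<Rightarrow> 'm \<Rightarrow> 'b::metric_space"
  assumes Hm: "\<And>v. H v \<in> borel_measurable M"
    and Hc: "\<And>x. x \<in> space M \<Longrightarrow> continuous_on UNIV (\<lambda>v. H v x)"
    and wm: "w \<in> borel_measurable M"
  shows "(\<lambda>x. H (w x) x) \<in> borel_measurable M"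
proof (rule borel_measurable_LIMSEQ_metric[where f = "\<lambda>k x. H (qround k (w x)) x"])
  fix k
  define P where "P a = (\<Sum>b\<in>Basis. (of_int (a b) / real (Suc k)) *\<^sub>R b)" for a :: "'a \<Rightarrow> int"
  have e: "qround k (w x) = P (restrict (\<lambda>b. \<lfloor>real (Suc k) * (w x \<bullet> b)\<rfloor>) Basis)" for x
    unfolding qround_def P_def by (intro sum.cong) auto
  have "(\<lambda>x. H (P (restrict (\<lambda>b. \<lfloor>real (Suc k) * (w x \<bullet> b)\<rfloor>) Basis)) x) \<in> borel_measurable M"
    by (rule measurable_compose_countable'[OF Hm qround_meas_count[OF wm]]) (intro countable_PiE, auto)
  then show "(\<lambda>x. H (qround k (w x)) x) \<in> borel_measurable M" unfolding e .
next
  fix x assume x: "x \<in> space M"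
  have "((\<lambda>v. H v x) \<longlongrightarrow> H (w x) x) (at (w x))"
    using Hc[OF x] by (simp add: continuous_on_def)
  moreover have "isCont (\<lambda>v. H v x) (w x)"
    using Hc[OF x] by (simp add: continuous_on_eq_continuous_at)
  then show "(\<lambda>k. H (qround k (w x)) x) \<longlonglongrightarrow> H (w x) x"
    using qround_tendsto isCont_tendsto_compose by blast
qed




locale msetting = setting f g \<beta> n "space D" W1
  for f :: "'a::euclidean_space \<Rightarrow> 'z \<Rightarrow> real" and g \<beta> n and D :: "'z measure" and W1 +
  assumes D: "prob_space D" and integ_f: "\<And>w. integrable D (f w)"
begin

lemma f_meas[measurable]: "f v \<in> borel_measurable D"
  using integ_f by auto

lemma f_cont: "z \<in> space D \<Longrightarrow> continuous_on UNIV (\<lambda>v. f v z)"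
  using grad by (meson continuous_at_imp_continuous_on has_derivative_continuous)

lemma g_cont: "z \<in> space D \<Longrightarrow> continuous_on UNIV (\<lambda>v. g v z)"
proof -
  assume z: "z \<in> space D"
  have "\<beta>-lipschitz_on UNIV (\<lambda>v. g v z)"
    by (rule lipschitz_onI) (use smooth[OF z] beta in \<open>auto simp: dist_norm\<close>)
  then show ?thesis by (rule lipschitz_on_continuous_on)
qed

lemma g_meas[measurable]: "g v \<in> borel_measurable D"
proof (subst borel_measurable_euclidean_space, intro ballI)
  fix b :: 'a assume b: "b \<in> Basis"
  show "(\<lambda>z. g v z \<bullet> b) \<in> borel_measurable D"
  proof (rule borel_measurable_LIMSEQ_real[where u = "\<lambda>k z. (f (v + (1 / real (Suc k)) *\<^sub>R b) z - f v z) / (1 / real (Suc k))"])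
    fix k show "(\<lambda>z. (f (v + (1 / real (Suc k)) *\<^sub>R b) z - f v z) / (1 / real (Suc k))) \<in> borel_measurable D"
      by measurable
  next
    fix z assume z: "z \<in> space D"
    have "((\<lambda>t. f (v + t *\<^sub>R b) z) has_real_derivative (g (v + 0 *\<^sub>R b) z \<bullet> b)) (at 0)"
      by (rule line_deriv) (rule grad[OF z])
    then have h1: "((\<lambda>t. (f (v + t *\<^sub>R b) z - f (v + 0 *\<^sub>R b) z) / (t - 0)) \<longlongrightarrow> g v z \<bullet> b) (at 0)"
      unfolding has_field_derivative_iff by simp
    have h2: "(\<lambda>k. 1 / real (Suc k)) \<longlonglongrightarrow> 0"
      by (rule LIMSEQ_inverse_real_of_nat[unfolded inverse_eq_divide])
    have "(\<lambda>k. (f (v + (1 / real (Suc k)) *\<^sub>R b) z - f (v + 0 *\<^sub>R b) z) / (1 / real (Suc k) - 0)) \<longlonglongrightarrow> g v z \<bullet> b"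
    proof -
      have "\<forall>S. (\<forall>k. S k \<noteq> 0) \<and> S \<longlonglongrightarrow> 0 \<longrightarrow> (\<lambda>k. (f (v + S k *\<^sub>R b) z - f (v + 0 *\<^sub>R b) z) / (S k - 0)) \<longlonglongrightarrow> g v z \<bullet> b"
        using LIMSEQ_SEQ_conv[where X = "\<lambda>t. (f (v + t *\<^sub>R b) z - f (v + 0 *\<^sub>R b) z) / (t - 0)"] h1 by blast
      then show ?thesis by (rule allE[where x = "\<lambda>k. 1 / real (Suc k)"]) (use h2 in auto)
    qed
    then show "(\<lambda>k. (f (v + (1 / real (Suc k)) *\<^sub>R b) z - f v z) / (1 / real (Suc k))) \<longlonglongrightarrow> g v z \<bullet> b"
      by simp
  qed
qed

lemma gd_meas:
  "(\<lambda>S. gdS S k) \<in> borel_measurable (PiM {..<n} (\<lambda>_. D))"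
proof (induction k)
  case 0 then show ?case by simp
next
  case (Suc k)
  have "(\<lambda>S. g (gdS S k) (S j)) \<in> borel_measurable (PiM {..<n} (\<lambda>_. D))" if j: "j < n" for j
  proof (rule carath[where H = "\<lambda>v S. g v (S j)", OF _ _ Suc.IH])
    fix v show "(\<lambda>S. g v (S j)) \<in> borel_measurable (PiM {..<n} (\<lambda>_. D))"
    proof -
      have "(\<lambda>S. S j) \<in> measurable (PiM {..<n} (\<lambda>_. D)) D" using j by (intro measurable_component_singleton) auto
      from measurable_compose[OF this g_meas] show ?thesis .
    qed
  next
    fix S assume "S \<in> space (PiM {..<n} (\<lambda>_. D))"
    then have "S j \<in> space D" using j by (auto simp: space_PiM)
    then show "continuous_on UNIV (\<lambda>v. g v (S j))" by (rule g_cont)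
  qed
  then show ?case using Suc.IH by simp
qed

lemma fgd_meas:
  assumes Sx: "Sx \<in> measurable M (PiM {..<n} (\<lambda>_. D))" and zx: "zx \<in> measurable M D"
  shows "(\<lambda>x. f (gdS (Sx x) k) (zx x)) \<in> borel_measurable M"
proof (rule carath[where H = "\<lambda>v x. f v (zx x)"])
  show "(\<lambda>x. gdS (Sx x) k) \<in> borel_measurable M"
    using measurable_compose[OF Sx gd_meas] .
  fix v show "(\<lambda>x. f v (zx x)) \<in> borel_measurable M" using zx by measurable
next
  fix x assume "x \<in> space M"
  then have "zx x \<in> space D" using zx by (auto simp: measurable_space)
  then show "continuous_on UNIV (\<lambda>v. f v (zx x))" by (rule f_cont)
qed

end




definition sw :: "nat \<Rightarrow> nat \<Rightarrow> nat \<Rightarrow> nat" where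
  "sw n i k = (if k = i then n else if k = n then i else k)"

context msetting begin

abbreviation "SM \<equiv> PiM {..<n} (\<lambda>_. D)"
abbreviation "MM \<equiv> PiM {..n} (\<lambda>_. D)"
definition "rr x = restrict x {..<n}"
definition "rho i x = (\<lambda>k\<in>{..n}. x (sw n i k))"

lemma prodP: "product_prob_space (\<lambda>_::nat. D)"
  unfolding product_prob_space_def product_prob_space_axioms_def product_sigma_finite_def
  using D prob_space_imp_sigma_finite by blast

lemma probSM: "prob_space SM" by (intro prob_space_PiM D)
lemma probMM: "prob_space MM" by (intro prob_space_PiM D)

lemma rr_meas[measurable]: "rr \<in> measurable MM SM"
  unfolding rr_def by (rule measurable_restrict_subset) auto

lemma rho_meas[measurable]: "i < n \<Longrightarrow> rho i \<in> measurable MM MM"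
  unfolding rho_def by (intro measurable_restrict measurable_component_singleton) (auto simp: sw_def)

lemma distr_rr: "distr MM SM rr = SM"
proof -
  have "{..<n} \<subseteq> {..n}" by auto
  then show ?thesis unfolding rr_def using product_prob_space.distr_restrict[OF prodP, of "{..<n}" "{..n}"] by simp
qed

lemma distr_rho: "i < n \<Longrightarrow> distr MM MM (rho i) = MM"
proof -
  assume i: "i < n"
  have inj: "inj_on (sw n i) {..n}" unfolding inj_on_def sw_def by auto
  have pi: "sw n i \<in> {..n} \<rightarrow> {..n}" using i unfolding sw_def by auto
  have "distr (PiM {..n} (\<lambda>_. D)) (PiM {..n} (\<lambda>k. (\<lambda>_. D) (sw n i k))) (\<lambda>\<omega>. \<lambda>k\<in>{..n}. \<omega> (sw n i k)) = PiM {..n} (\<lambda>k. (\<lambda>_. D) (sw n i k))"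
    by (rule distr_PiM_reindex[OF _ inj pi]) (rule D)
  then show ?thesis unfolding rho_def by simp
qed

lemma L1:
  fixes F :: "(nat \<Rightarrow> 'z) \<Rightarrow> real"
  assumes [measurable]: "F \<in> borel_measurable SM"
  shows "integral\<^sup>L MM (\<lambda>x. F (rr x)) = integral\<^sup>L SM F"
    and "integrable MM (\<lambda>x. F (rr x)) \<longleftrightarrow> integrable SM F"
  using integral_distr[OF rr_meas assms] integrable_distr_eq[OF rr_meas assms] distr_rr by auto

lemma L2:
  fixes F :: "(nat \<Rightarrow> 'z) \<Rightarrow> real"
  assumes i: "i < n" and [measurable]: "F \<in> borel_measurable MM"
  shows "integral\<^sup>L MM (\<lambda>x. F (rho i x)) = integral\<^sup>L MM F"
    and "integrable MM (\<lambda>x. F (rho i x)) \<longleftrightarrow> integrable MM F"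
  using integral_distr[OF rho_meas[OF i] assms(2)] integrable_distr_eq[OF rho_meas[OF i] assms(2)] distr_rho[OF i] by auto

lemma L4:
  fixes h :: "'z \<Rightarrow> real"
  assumes j: "j < n" and [measurable]: "h \<in> borel_measurable D"
  shows "integral\<^sup>L SM (\<lambda>S. h (S j)) = integral\<^sup>L D h"
    and "integrable SM (\<lambda>S. h (S j)) \<longleftrightarrow> integrable D h"
proof -
  have m: "(\<lambda>S. S j) \<in> measurable SM D" using j by (intro measurable_component_singleton) auto
  have d: "distr SM D (\<lambda>S. S j) = D"
    using product_prob_space.PiM_component[OF prodP, of j "{..<n}"] j by auto
  show "integral\<^sup>L SM (\<lambda>S. h (S j)) = integral\<^sup>L D h"
    using integral_distr[OF m assms(2)] d by auto
  show "integrable SM (\<lambda>S. h (S j)) \<longleftrightarrow> integrable D h"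
    using integrable_distr_eq[OF m assms(2)] d by auto
qed

lemma L3:
  fixes F :: "(nat \<Rightarrow> 'z) \<Rightarrow> 'z \<Rightarrow> real"
  assumes [measurable]: "(\<lambda>x. F (rr x) (x n)) \<in> borel_measurable MM"
  shows "(\<integral>\<^sup>+x. ennreal (F (rr x) (x n)) \<partial>MM) = (\<integral>\<^sup>+S. (\<integral>\<^sup>+y. ennreal (F S y) \<partial>D) \<partial>SM)"
proof -
  interpret P: product_prob_space "\<lambda>_::nat. D" by (rule prodP)
  have e: "{..n} = insert n {..<n}" by auto
  have m: "(\<lambda>x. ennreal (F (rr x) (x n))) \<in> borel_measurable (PiM (insert n {..<n}) (\<lambda>_. D))"
    unfolding e[symmetric] by measurable
  have "(\<integral>\<^sup>+x. ennreal (F (rr x) (x n)) \<partial>MM) = (\<integral>\<^sup>+S. (\<integral>\<^sup>+y. ennreal (F (rr (S(n := y))) ((S(n := y)) n)) \<partial>D) \<partial>SM)"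
    unfolding e using P.product_nn_integral_insert[OF _ _ m] by simp
  also have "\<dots> = (\<integral>\<^sup>+S. (\<integral>\<^sup>+y. ennreal (F S y) \<partial>D) \<partial>SM)"
  proof (rule nn_integral_cong)
    fix S assume "S \<in> space SM"
    then have "rr (S(n := y)) = S" for y
      unfolding rr_def by (auto simp: space_PiM PiE_def extensional_def fun_eq_iff)
    then show "(\<integral>\<^sup>+y. ennreal (F (rr (S(n := y))) ((S(n := y)) n)) \<partial>D) = (\<integral>\<^sup>+y. ennreal (F S y) \<partial>D)" by simp
  qed
  finally show ?thesis .
qed

lemma rr_space: "x \<in> space MM \<Longrightarrow> rr x \<in> space SM"
  using measurable_space[OF rr_meas] by blast
lemma rho_space: "i < n \<Longrightarrow> x \<in> space MM \<Longrightarrow> rho i x \<in> space MM"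
  using measurable_space[OF rho_meas] by blast
lemma MM_comp: "x \<in> space MM \<Longrightarrow> k \<le> n \<Longrightarrow> x k \<in> space D"
  by (auto simp: space_PiM)
lemma SM_comp: "S \<in> space SM \<Longrightarrow> k < n \<Longrightarrow> S k \<in> space D"
  by (auto simp: space_PiM)
lemma rr_app: "k < n \<Longrightarrow> rr x k = x k" unfolding rr_def by simp
lemma rho_app_i: "i < n \<Longrightarrow> rho i x i = x n" unfolding rho_def sw_def by simp
lemma rho_app_n: "i < n \<Longrightarrow> rho i x n = x i" unfolding rho_def sw_def by simp
lemma rho_app_j: "i < n \<Longrightarrow> j < n \<Longrightarrow> j \<noteq> i \<Longrightarrow> rho i x j = x j" unfolding rho_def sw_def by simp

end




locale full = msetting f g \<beta> n D W1
  for f :: "'a::euclidean_space \<Rightarrow> 'z \<Rightarrow> real" and g \<beta> n and D :: "'z measure" and W1 +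
  fixes WS :: "(nat \<Rightarrow> 'z) \<Rightarrow> 'a" and T :: nat
  assumes T: "T \<ge> 1"
    and WS: "\<And>S w. S \<in> space (PiM {..<n} (\<lambda>_. D)) \<Longrightarrow> emp_risk n f S (WS S) \<le> emp_risk n f S w"
    and integ1: "integrable (PiM {..<n} (\<lambda>_. D)) (\<lambda>S. pop_risk D f (gd g (\<lambda>_. 1 / (2 * \<beta>)) n W1 S T))"
    and integ2: "integrable (PiM {..<n} (\<lambda>_. D)) (\<lambda>S. emp_risk n f S (gd g (\<lambda>_. 1 / (2 * \<beta>)) n W1 S T))"
    and integ3: "integrable (PiM {..<n} (\<lambda>_. D)) (\<lambda>S. emp_risk n f S (WS S))"
    and integ4: "integrable (PiM {..<n} (\<lambda>_. D)) (\<lambda>S. (norm (W1 - WS S))\<^sup>2)"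
begin

lemma gdp: "S \<in> space SM \<Longrightarrow> gdproc (emp_risk n f S) (\<lambda>w. (\<Sum>j<n. (1 / real n) *\<^sub>R g w (S j))) \<beta> (gdS S) (WS S)"
  by (rule gdproc_S) (auto intro: SM_comp WS)

lemma emp_nonneg: "S \<in> space SM \<Longrightarrow> emp_risk n f S w \<ge> 0"
  unfolding emp_risk_def using nonneg SM_comp by (auto intro!: divide_nonneg_nonneg sum_nonneg)

lemma emp_le: "S \<in> space SM \<Longrightarrow> emp_risk n f S (gdS S k) \<le> emp_risk n f S (WS S) + \<beta> / 2 * (norm (W1 - WS S))\<^sup>2"
proof -
  assume S: "S \<in> space SM"
  interpret gp: gdproc "emp_risk n f S" "\<lambda>w. (\<Sum>j<n. (1 / real n) *\<^sub>R g w (S j))" \<beta> "gdS S" "WS S"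
    by (rule gdp[OF S])
  have "emp_risk n f S (gdS S k) \<le> emp_risk n f S (gdS S 0)" by (rule gp.mono_le) simp
  then show ?thesis using gp.first_bound by simp
qed

lemma f_le: "S \<in> space SM \<Longrightarrow> i < n \<Longrightarrow> f w (S i) \<le> real n * emp_risk n f S w"
proof -
  assume S: "S \<in> space SM" and i: "i < n"
  have "f w (S i) \<le> (\<Sum>j<n. f w (S j))"
    by (rule member_le_sum) (use i nonneg SM_comp[OF S] in auto)
  then show ?thesis unfolding emp_risk_def using n by simp
qed

lemma meas_fk[measurable]: "i < n \<Longrightarrow> (\<lambda>S. f (gdS S k) (S i)) \<in> borel_measurable SM"
  by (rule fgd_meas[where Sx = "\<lambda>S. S" and zx = "\<lambda>S. S i"]) (auto intro: measurable_component_singleton)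

lemma emp_unf: "emp_risk n f S w = (\<Sum>j<n. f w (S j)) / real n"
  unfolding emp_risk_def ..

lemma meas_emp[measurable]: "(\<lambda>S. emp_risk n f S (gdS S k)) \<in> borel_measurable SM"
  unfolding emp_unf by (intro borel_measurable_divide borel_measurable_sum meas_fk borel_measurable_const) auto

lemma int_bound: "integrable SM (\<lambda>S. real n * (emp_risk n f S (WS S) + \<beta> / 2 * (norm (W1 - WS S))\<^sup>2))"
  using integ3 integ4 by auto

lemma int_fk: assumes i: "i < n" shows "integrable SM (\<lambda>S. f (gdS S k) (S i))"
proof (rule Bochner_Integration.integrable_bound[OF int_bound meas_fk[OF i]])
  show "AE S in SM. norm (f (gdS S k) (S i)) \<le> norm (real n * (emp_risk n f S (WS S) + \<beta> / 2 * (norm (W1 - WS S))\<^sup>2))"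
  proof (rule AE_I2)
    fix S assume S: "S \<in> space SM"
    have a: "0 \<le> f (gdS S k) (S i)" using nonneg SM_comp[OF S i] by auto
    have b: "f (gdS S k) (S i) \<le> real n * (emp_risk n f S (WS S) + \<beta> / 2 * (norm (W1 - WS S))\<^sup>2)"
      using f_le[OF S i, of "gdS S k"] emp_le[OF S, of k] by (smt (verit) mult_left_mono of_nat_0_le_iff)
    show "norm (f (gdS S k) (S i)) \<le> norm (real n * (emp_risk n f S (WS S) + \<beta> / 2 * (norm (W1 - WS S))\<^sup>2))"
      using a b by simp
  qed
qed

lemma int_sum: "integrable SM (\<lambda>S. \<Sum>j<n. f (gdS S k) (S j))"
proof -
  define h where "h j S = f (gdS S k) (S j)" for j S
  have "integrable SM (\<lambda>S. \<Sum>j<n. h j S)" by (rule Bochner_Integration.integrable_sum) (auto simp: h_def int_fk)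
  then show ?thesis unfolding h_def .
qed

lemma int_emp: "integrable SM (\<lambda>S. emp_risk n f S (gdS S k))"
  unfolding emp_unf by (rule integrable_divide_zero) (rule int_sum)

lemma E_eq: "(\<integral>S. emp_risk n f S (gdS S k) \<partial>SM) = (1 / real n) * (\<Sum>i<n. (\<integral>S. f (gdS S k) (S i) \<partial>SM))"
proof -
  have "(\<integral>S. emp_risk n f S (gdS S k) \<partial>SM) = (\<integral>S. (\<Sum>j<n. f (gdS S k) (S j)) \<partial>SM) / real n"
    unfolding emp_unf by (rule integral_divide_zero)
  also have "(\<integral>S. (\<Sum>j<n. f (gdS S k) (S j)) \<partial>SM) = (\<Sum>i<n. (\<integral>S. f (gdS S k) (S i) \<partial>SM))"
  proof -
    define h where "h j S = f (gdS S k) (S j)" for j S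
    have "(\<integral>S. (\<Sum>j<n. h j S) \<partial>SM) = (\<Sum>i<n. (\<integral>S. h i S \<partial>SM))" by (rule Bochner_Integration.integral_sum) (auto simp: h_def int_fk)
    then show ?thesis unfolding h_def .
  qed
  finally show ?thesis by simp
qed

end




context full begin

definition "Phi x = f (gdS (rr x) T) (x n)"
definition "Fk i k x = f (gdS (rr x) k) (x i)"
definition "e k i = (\<integral>S. f (gdS S k) (S i) \<partial>SM)"

lemma meas_Phi[measurable]: "Phi \<in> borel_measurable MM"
  unfolding Phi_def by (rule fgd_meas[where Sx = rr and zx = "\<lambda>x. x n"]) (auto intro: measurable_component_singleton)

lemma Fk_rr: "i < n \<Longrightarrow> Fk i k x = (\<lambda>S. f (gdS S k) (S i)) (rr x)"
  unfolding Fk_def by (simp add: rr_app)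

lemma meas_Fk[measurable]: "i < n \<Longrightarrow> Fk i k \<in> borel_measurable MM"
proof -
  assume i: "i < n"
  have "(\<lambda>x. (\<lambda>S. f (gdS S k) (S i)) (rr x)) \<in> borel_measurable MM"
    by (rule measurable_compose[OF rr_meas meas_fk[OF i]])
  then show ?thesis using Fk_rr[OF i] by (simp add: fun_eq_iff[symmetric] cong: measurable_cong)
qed

lemma Fk_int: "i < n \<Longrightarrow> integrable MM (Fk i k) \<and> integral\<^sup>L MM (Fk i k) = e k i"
proof -
  assume i: "i < n"
  have eq: "Fk i k = (\<lambda>x. (\<lambda>S. f (gdS S k) (S i)) (rr x))" using Fk_rr[OF i] by (simp add: fun_eq_iff)
  show ?thesis unfolding eq e_def using L1[OF meas_fk[OF i]] int_fk[OF i] by simp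
qed

lemma Fk_rho_int: "i < n \<Longrightarrow> integrable MM (\<lambda>x. Fk i k (rho i x)) \<and> integral\<^sup>L MM (\<lambda>x. Fk i k (rho i x)) = e k i"
  using L2[OF _ meas_Fk] Fk_int by simp

lemma pop_nonneg: "pop_risk D f w \<ge> 0"
  unfolding pop_risk_def by (rule Bochner_Integration.integral_nonneg) (use nonneg in auto)

lemma Phi_int: "integrable MM Phi \<and> integral\<^sup>L MM Phi = (\<integral>S. pop_risk D f (gdS S T) \<partial>SM)"
proof -
  have "(\<integral>\<^sup>+x. ennreal (Phi x) \<partial>MM) = (\<integral>\<^sup>+S. (\<integral>\<^sup>+y. ennreal (f (gdS S T) y) \<partial>D) \<partial>SM)"
    unfolding Phi_def by (rule L3[where F = "\<lambda>S y. f (gdS S T) y"]) (use meas_Phi[unfolded Phi_def] in simp)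
  also have "\<dots> = (\<integral>\<^sup>+S. ennreal (pop_risk D f (gdS S T)) \<partial>SM)"
  proof (rule nn_integral_cong)
    fix S
    show "(\<integral>\<^sup>+y. ennreal (f (gdS S T) y) \<partial>D) = ennreal (pop_risk D f (gdS S T))"
      unfolding pop_risk_def by (rule nn_integral_eq_integral[OF integ_f]) (use nonneg in auto)
  qed
  also have "\<dots> = ennreal (\<integral>S. pop_risk D f (gdS S T) \<partial>SM)"
    by (rule nn_integral_eq_integral[OF integ1]) (use pop_nonneg in auto)
  finally have nn: "(\<integral>\<^sup>+x. ennreal (Phi x) \<partial>MM) = ennreal (\<integral>S. pop_risk D f (gdS S T) \<partial>SM)" .
  have ae: "AE x in MM. 0 \<le> Phi x"
    by (rule AE_I2) (auto simp: Phi_def intro!: nonneg MM_comp)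
  have I0: "(\<integral>S. pop_risk D f (gdS S T) \<partial>SM) \<ge> 0"
    by (rule Bochner_Integration.integral_nonneg) (use pop_nonneg in auto)
  show ?thesis using integrableI_nn_integral_finite[OF meas_Phi ae nn] integral_eq_nn_integral[OF meas_Phi ae] nn I0 by simp
qed

lemma Phi_rho_int: "i < n \<Longrightarrow> integrable MM (\<lambda>x. Phi (rho i x)) \<and> integral\<^sup>L MM (\<lambda>x. Phi (rho i x)) = integral\<^sup>L MM Phi"
  using L2[OF _ meas_Phi] Phi_int by simp

end




lemma arith_fin:
  fixes a b X Y :: real
  assumes "a \<ge> 0" "b \<ge> 0" "X \<ge> 0" "Y \<ge> 0"
  shows "a * (X + Y) + (a + b) * (X + 3 / 2 * Y) \<le> 8 * (a + 2 * b) * (3 * Y + X)"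
proof -
  have "a * X \<ge> 0" "a * Y \<ge> 0" "b * X \<ge> 0" "b * Y \<ge> 0" using assms by auto
  then show ?thesis by (simp add: algebra_simps)
qed

context full begin

definition "c1 = real T / real n"
definition "c2 = 1 / (2 * real n) + real T / (2 * (real n)\<^sup>2)"

lemma pw:
  assumes i: "i < n" and x: "x \<in> space MM"
  shows "\<bar>Phi (rho i x) - Fk i T x\<bar> \<le> c1 * Fk i T x + c2 * (\<Sum>k<T. Fk i k x + Fk i k (rho i x))"
proof -
  define S where "S = rr x"
  define S' where "S' = rr (rho i x)"
  have SD: "\<And>j. j < n \<Longrightarrow> S j \<in> space D" unfolding S_def using SM_comp[OF rr_space[OF x]] by blast
  have S'D: "\<And>j. j < n \<Longrightarrow> S' j \<in> space D" unfolding S'_def using SM_comp[OF rr_space[OF rho_space[OF i x]]] by blast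
  have same: "\<And>j. j < n \<Longrightarrow> j \<noteq> i \<Longrightarrow> S' j = S j" unfolding S_def S'_def using i by (simp add: rr_app rho_app_j)
  note st = stab_pointwise[where S=S and S'=S' and i=i and T=T, OF SD S'D i same]
  have e1: "Phi (rho i x) = f (gdS S' T) (S i)" unfolding Phi_def S_def S'_def using i by (simp add: rr_app rho_app_n)
  have e2: "Fk i k x = f (gdS S k) (S i)" for k unfolding Fk_def S_def using i by (simp add: rr_app)
  have e3: "Fk i k (rho i x) = f (gdS S' k) (S' i)" for k unfolding Fk_def S'_def using i by (simp add: rr_app rho_app_i)
  have "(1 / real n) * (real T * f (gdS S T) (S i) + (1/2) * (\<Sum>k<T. f (gdS S k) (S i) + f (gdS S' k) (S' i)))
     + (real T / (2 * (real n)\<^sup>2)) * (\<Sum>k<T. f (gdS S k) (S i) + f (gdS S' k) (S' i))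
     = c1 * f (gdS S T) (S i) + c2 * (\<Sum>k<T. f (gdS S k) (S i) + f (gdS S' k) (S' i))"
    unfolding c1_def c2_def by (simp add: algebra_simps)
  then show ?thesis using st unfolding e1 e2 e3 by simp
qed

lemma Fk_int1: "i < n \<Longrightarrow> integrable MM (Fk i k)" using Fk_int by blast
lemma Fk_int2: "i < n \<Longrightarrow> integral\<^sup>L MM (Fk i k) = e k i" using Fk_int by blast
lemma Fkr_int1: "i < n \<Longrightarrow> integrable MM (\<lambda>x. Fk i k (rho i x))" using Fk_rho_int by blast
lemma Fkr_int2: "i < n \<Longrightarrow> integral\<^sup>L MM (\<lambda>x. Fk i k (rho i x)) = e k i" using Fk_rho_int by blast

lemma Bd_int:
  assumes i: "i < n"
  shows "integrable MM (\<lambda>x. c1 * Fk i T x + c2 * (\<Sum>k<T. Fk i k x + Fk i k (rho i x)))"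
    and "integral\<^sup>L MM (\<lambda>x. c1 * Fk i T x + c2 * (\<Sum>k<T. Fk i k x + Fk i k (rho i x))) = c1 * e T i + c2 * (\<Sum>k<T. 2 * e k i)"
proof -
  define h where "h k x = Fk i k x + Fk i k (rho i x)" for k x
  have hi: "integrable MM (h k)" for k unfolding h_def using Fk_int1[OF i] Fkr_int1[OF i] by (rule Bochner_Integration.integrable_add)
  have hv: "integral\<^sup>L MM (h k) = 2 * e k i" for k
    unfolding h_def using Bochner_Integration.integral_add[OF Fk_int1[OF i] Fkr_int1[OF i]] Fk_int2[OF i] Fkr_int2[OF i] by simp
  have si: "integrable MM (\<lambda>x. \<Sum>k<T. h k x)" by (rule Bochner_Integration.integrable_sum) (rule hi)
  have sv: "integral\<^sup>L MM (\<lambda>x. \<Sum>k<T. h k x) = (\<Sum>k<T. 2 * e k i)"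
    using Bochner_Integration.integral_sum[of "{..<T}" MM h] hi hv by simp
  have a: "integrable MM (\<lambda>x. c1 * Fk i T x)" using Fk_int1[OF i] by simp
  have b: "integrable MM (\<lambda>x. c2 * (\<Sum>k<T. h k x))" using si by simp
  show "integrable MM (\<lambda>x. c1 * Fk i T x + c2 * (\<Sum>k<T. Fk i k x + Fk i k (rho i x)))"
    using Bochner_Integration.integrable_add[OF a b] unfolding h_def .
  have "integral\<^sup>L MM (\<lambda>x. c1 * Fk i T x + c2 * (\<Sum>k<T. h k x)) = c1 * e T i + c2 * (\<Sum>k<T. 2 * e k i)"
    using Bochner_Integration.integral_add[OF a b] Fk_int2[OF i] sv by simp
  then show "integral\<^sup>L MM (\<lambda>x. c1 * Fk i T x + c2 * (\<Sum>k<T. Fk i k x + Fk i k (rho i x))) = c1 * e T i + c2 * (\<Sum>k<T. 2 * e k i)"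
    unfolding h_def .
qed

lemma term_bound:
  assumes i: "i < n"
  shows "\<bar>integral\<^sup>L MM (\<lambda>x. Phi (rho i x)) - e T i\<bar> \<le> c1 * e T i + c2 * (\<Sum>k<T. 2 * e k i)"
proof -
  have pi: "integrable MM (\<lambda>x. Phi (rho i x))" using Phi_rho_int[OF i] by blast
  have di: "integrable MM (\<lambda>x. Phi (rho i x) - Fk i T x)"
    by (rule Bochner_Integration.integrable_diff[OF pi Fk_int1[OF i]])
  have "integral\<^sup>L MM (\<lambda>x. Phi (rho i x)) - e T i = integral\<^sup>L MM (\<lambda>x. Phi (rho i x) - Fk i T x)"
    using Bochner_Integration.integral_diff[OF pi Fk_int1[OF i]] Fk_int2[OF i] by simp
  also have "\<bar>\<dots>\<bar> \<le> integral\<^sup>L MM (\<lambda>x. \<bar>Phi (rho i x) - Fk i T x\<bar>)"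
    by (rule integral_abs_bound)
  also have "\<dots> \<le> integral\<^sup>L MM (\<lambda>x. c1 * Fk i T x + c2 * (\<Sum>k<T. Fk i k x + Fk i k (rho i x)))"
    by (rule Bochner_Integration.integral_mono[OF _ Bd_int(1)[OF i]]) (use di pw[OF i] in auto)
  also have "\<dots> = c1 * e T i + c2 * (\<Sum>k<T. 2 * e k i)" by (rule Bd_int(2)[OF i])
  finally show ?thesis .
qed

end




context full begin

abbreviation "eps \<equiv> (\<integral>S. emp_risk n f S (WS S) \<partial>SM)"
abbreviation "Del \<equiv> (\<integral>S. (norm (W1 - WS S))\<^sup>2 \<partial>SM)"
definition "EE k = (\<integral>S. emp_risk n f S (gdS S k) \<partial>SM)"

lemma EE_eq: "EE k = (1 / real n) * (\<Sum>i<n. e k i)"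
  unfolding EE_def e_def by (rule E_eq)

lemma eps_nonneg: "eps \<ge> 0"
  by (rule Bochner_Integration.integral_nonneg) (use emp_nonneg in auto)
lemma Del_nonneg: "Del \<ge> 0"
  by (rule Bochner_Integration.integral_nonneg) auto

lemma ET_bound: "real T * EE T \<le> real T * eps + \<beta> * Del"
proof -
  have "real T * EE T = (\<integral>S. real T * emp_risk n f S (gdS S T) \<partial>SM)" unfolding EE_def by simp
  also have "\<dots> \<le> (\<integral>S. real T * emp_risk n f S (WS S) + \<beta> * (norm (W1 - WS S))\<^sup>2 \<partial>SM)"
  proof (rule Bochner_Integration.integral_mono)
    show "integrable SM (\<lambda>S. real T * emp_risk n f S (gdS S T))" using int_emp by simp
    show "integrable SM (\<lambda>S. real T * emp_risk n f S (WS S) + \<beta> * (norm (W1 - WS S))\<^sup>2)"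
      using integ3 integ4 by simp
    fix S assume S: "S \<in> space SM"
    interpret gp: gdproc "emp_risk n f S" "\<lambda>w. (\<Sum>j<n. (1 / real n) *\<^sub>R g w (S j))" \<beta> "gdS S" "WS S"
      by (rule gdp[OF S])
    show "real T * emp_risk n f S (gdS S T) \<le> real T * emp_risk n f S (WS S) + \<beta> * (norm (W1 - WS S))\<^sup>2"
      using gp.last_bound[of T] by (simp add: algebra_simps)
  qed
  also have "\<dots> = real T * eps + \<beta> * Del"
    using integ3 integ4 by simp
  finally show ?thesis .
qed

lemma Esum_bound: "(\<Sum>k<T. EE k) \<le> real T * eps + 3 / 2 * \<beta> * Del"
proof -
  have "(\<Sum>k<T. EE k) = (\<integral>S. (\<Sum>k<T. emp_risk n f S (gdS S k)) \<partial>SM)"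
    unfolding EE_def by (rule Bochner_Integration.integral_sum[symmetric]) (rule int_emp)
  also have "\<dots> \<le> (\<integral>S. real T * emp_risk n f S (WS S) + 3 / 2 * \<beta> * (norm (W1 - WS S))\<^sup>2 \<partial>SM)"
  proof (rule Bochner_Integration.integral_mono)
    show "integrable SM (\<lambda>S. \<Sum>k<T. emp_risk n f S (gdS S k))"
      by (rule Bochner_Integration.integrable_sum) (rule int_emp)
    show "integrable SM (\<lambda>S. real T * emp_risk n f S (WS S) + 3 / 2 * \<beta> * (norm (W1 - WS S))\<^sup>2)"
      using integ3 integ4 by simp
    fix S assume S: "S \<in> space SM"
    interpret gp: gdproc "emp_risk n f S" "\<lambda>w. (\<Sum>j<n. (1 / real n) *\<^sub>R g w (S j))" \<beta> "gdS S" "WS S"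
      by (rule gdp[OF S])
    show "(\<Sum>k<T. emp_risk n f S (gdS S k)) \<le> real T * emp_risk n f S (WS S) + 3 / 2 * \<beta> * (norm (W1 - WS S))\<^sup>2"
      using gp.sum_bound[OF T] by simp
  qed
  also have "\<dots> = real T * eps + 3 / 2 * \<beta> * Del"
    using integ3 integ4 by simp
  finally show ?thesis .
qed

lemma eps_le: "eps \<le> pop_risk D f w"
proof -
  have ii: "integrable SM (\<lambda>S. f w (S j))" if "j < n" for j using L4(2)[OF that f_meas] integ_f by simp
  have iv: "(\<integral>S. f w (S j) \<partial>SM) = pop_risk D f w" if "j < n" for j
    using L4(1)[OF that f_meas] unfolding pop_risk_def by simp
  have isum: "integrable SM (\<lambda>S. \<Sum>j<n. f w (S j))" by (rule Bochner_Integration.integrable_sum) (rule ii, simp)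
  have "eps \<le> (\<integral>S. emp_risk n f S w \<partial>SM)"
  proof (rule Bochner_Integration.integral_mono)
    show "integrable SM (\<lambda>S. emp_risk n f S (WS S))" by (rule integ3)
    show "integrable SM (\<lambda>S. emp_risk n f S w)" unfolding emp_unf by (rule integrable_divide_zero) (rule isum)
    show "\<And>S. S \<in> space SM \<Longrightarrow> emp_risk n f S (WS S) \<le> emp_risk n f S w" by (rule WS)
  qed
  also have "(\<integral>S. emp_risk n f S w \<partial>SM) = (\<integral>S. (\<Sum>j<n. f w (S j)) \<partial>SM) / real n"
    unfolding emp_unf by (rule integral_divide_zero)
  also have "(\<integral>S. (\<Sum>j<n. f w (S j)) \<partial>SM) = (\<Sum>j<n. (\<integral>S. f w (S j) \<partial>SM))"
    by (rule Bochner_Integration.integral_sum) (rule ii, simp)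
  also have "\<dots> = real n * pop_risk D f w" using iv by simp
  finally show ?thesis using n by simp
qed

lemma gen_bound:
  "\<bar>(\<integral>S. pop_risk D f (gdS S T) - emp_risk n f S (gdS S T) \<partial>SM)\<bar> \<le> c1 * EE T + 2 * c2 * (\<Sum>k<T. EE k)"
proof -
  have ipm: "integral\<^sup>L MM (\<lambda>x. Phi (rho i x)) = integral\<^sup>L MM Phi" if "i < n" for i using Phi_rho_int[OF that] by blast
  have "(\<integral>S. pop_risk D f (gdS S T) - emp_risk n f S (gdS S T) \<partial>SM) = (\<integral>S. pop_risk D f (gdS S T) \<partial>SM) - EE T"
    unfolding EE_def by (rule Bochner_Integration.integral_diff[OF integ1 int_emp])
  also have "(\<integral>S. pop_risk D f (gdS S T) \<partial>SM) = (1 / real n) * (\<Sum>i<n. integral\<^sup>L MM (\<lambda>x. Phi (rho i x)))"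
  proof -
    have "(\<Sum>i<n. integral\<^sup>L MM (\<lambda>x. Phi (rho i x))) = real n * integral\<^sup>L MM Phi" using ipm by simp
    then show ?thesis using Phi_int n by simp
  qed
  also have "(1 / real n) * (\<Sum>i<n. integral\<^sup>L MM (\<lambda>x. Phi (rho i x))) - EE T = (1 / real n) * (\<Sum>i<n. integral\<^sup>L MM (\<lambda>x. Phi (rho i x)) - e T i)"
    unfolding EE_eq by (simp add: sum_subtractf right_diff_distrib)
  finally have ge: "(\<integral>S. pop_risk D f (gdS S T) - emp_risk n f S (gdS S T) \<partial>SM) = (1 / real n) * (\<Sum>i<n. integral\<^sup>L MM (\<lambda>x. Phi (rho i x)) - e T i)" .
  have "\<bar>(1 / real n) * (\<Sum>i<n. integral\<^sup>L MM (\<lambda>x. Phi (rho i x)) - e T i)\<bar> \<le> (1 / real n) * (\<Sum>i<n. \<bar>integral\<^sup>L MM (\<lambda>x. Phi (rho i x)) - e T i\<bar>)"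
  proof -
    have sa: "\<bar>\<Sum>i<n. integral\<^sup>L MM (\<lambda>x. Phi (rho i x)) - e T i\<bar> \<le> (\<Sum>i<n. \<bar>integral\<^sup>L MM (\<lambda>x. Phi (rho i x)) - e T i\<bar>)"
      by (rule sum_abs)
    show ?thesis using sa n by (simp add: abs_mult divide_right_mono)
  qed
  also have "\<dots> \<le> (1 / real n) * (\<Sum>i<n. c1 * e T i + c2 * (\<Sum>k<T. 2 * e k i))"
    by (intro mult_left_mono sum_mono term_bound) auto
  also have "\<dots> = c1 * EE T + 2 * c2 * (\<Sum>k<T. EE k)"
  proof -
    have "(\<Sum>i<n. c1 * e T i + c2 * (\<Sum>k<T. 2 * e k i)) = c1 * (\<Sum>i<n. e T i) + 2 * c2 * (\<Sum>k<T. \<Sum>i<n. e k i)"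
      by (simp add: sum.distrib sum_distrib_left sum.swap[of _ "{..<T}"] algebra_simps)
    then show ?thesis unfolding EE_eq by (simp add: sum_distrib_left algebra_simps)
  qed
  finally show ?thesis unfolding ge .
qed

lemma main:
  "\<bar>(\<integral>S. pop_risk D f (gdS S T) - emp_risk n f S (gdS S T) \<partial>SM)\<bar>
      \<le> 8 * (1 / real n + 2 * real T / (real n)\<^sup>2) * (3 * \<beta> * Del + real T * eps) \<and>
   (\<integral>S. pop_risk D f (gdS S T) \<partial>SM) - pop_risk D f wst
      \<le> 8 * (1 / real n + 2 * real T / (real n)\<^sup>2) * (3 * \<beta> * Del + real T * eps) + 3 * \<beta> * Del / real T"
proof -
  define Bv where "Bv = 8 * (1 / real n + 2 * real T / (real n)\<^sup>2) * (3 * \<beta> * Del + real T * eps)"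
  have Tp: "real T > 0" using T by simp
  have np: "real n > 0" using n by simp
  have g1: "\<bar>(\<integral>S. pop_risk D f (gdS S T) - emp_risk n f S (gdS S T) \<partial>SM)\<bar> \<le> Bv"
  proof -
    have c1E: "c1 * EE T = (1 / real n) * (real T * EE T)" unfolding c1_def by simp
    have "c1 * EE T \<le> (1 / real n) * (real T * eps + \<beta> * Del)"
      unfolding c1E using ET_bound np by (intro mult_left_mono) auto
    moreover have "2 * c2 * (\<Sum>k<T. EE k) \<le> (1 / real n + real T / (real n)\<^sup>2) * (real T * eps + 3 / 2 * (\<beta> * Del))"
    proof -
      have e2: "2 * c2 = 1 / real n + real T / (real n)\<^sup>2" unfolding c2_def by (simp add: field_simps)
      have "(\<Sum>k<T. EE k) \<le> real T * eps + 3 / 2 * (\<beta> * Del)" using Esum_bound by (simp add: mult.assoc)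
      then show ?thesis unfolding e2 using np by (intro mult_left_mono) auto
    qed
    moreover have "(1 / real n) * (real T * eps + \<beta> * Del) + (1 / real n + real T / (real n)\<^sup>2) * (real T * eps + 3 / 2 * (\<beta> * Del)) \<le> Bv"
    proof -
      have "(1 / real n) * (real T * eps + \<beta> * Del) + (1 / real n + real T / (real n)\<^sup>2) * (real T * eps + 3 / 2 * (\<beta> * Del))
          \<le> 8 * (1 / real n + 2 * (real T / (real n)\<^sup>2)) * (3 * (\<beta> * Del) + real T * eps)"
        by (rule arith_fin) (use eps_nonneg Del_nonneg beta np in auto)
      then show ?thesis unfolding Bv_def by (simp add: algebra_simps)
    qed
    ultimately show ?thesis using gen_bound by linarith
  qed
  have g2: "(\<integral>S. pop_risk D f (gdS S T) \<partial>SM) - pop_risk D f wst \<le> Bv + 3 * \<beta> * Del / real T"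
  proof -
    have "(\<integral>S. pop_risk D f (gdS S T) - emp_risk n f S (gdS S T) \<partial>SM) = (\<integral>S. pop_risk D f (gdS S T) \<partial>SM) - EE T"
      unfolding EE_def by (rule Bochner_Integration.integral_diff[OF integ1 int_emp])
    then have a: "(\<integral>S. pop_risk D f (gdS S T) \<partial>SM) - EE T \<le> Bv" using g1 by linarith
    have b: "EE T \<le> eps + \<beta> * Del / real T"
    proof -
      have "real T * EE T \<le> real T * (eps + \<beta> * Del / real T)" using ET_bound Tp by (simp add: algebra_simps)
      then show ?thesis using Tp by simp
    qed
    have c: "eps \<le> pop_risk D f wst" by (rule eps_le)
    have d: "\<beta> * Del / real T \<le> 3 * \<beta> * Del / real T"
      using beta Del_nonneg Tp by (intro divide_right_mono) auto
    show ?thesis using a b c d by linarith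
  qed
  show ?thesis using g1 g2 unfolding Bv_def by blast
qed

end


theorem theorem12:
  fixes D :: "'z measure"
    and f :: "'a::euclidean_space \<Rightarrow> 'z \<Rightarrow> real"
    and g :: "'a \<Rightarrow> 'z \<Rightarrow> 'a"
    and \<beta> :: real and n T :: nat and W1 wstar :: 'a
    and WS :: "(nat \<Rightarrow> 'z) \<Rightarrow> 'a"
  defines "Smeas \<equiv> PiM {..<n} (\<lambda>_. D)"
    and "A \<equiv> (\<lambda>S. gd g (\<lambda>_. 1 / (2 * \<beta>)) n W1 S T)"
    and "B \<equiv> 8 * (1 / real n + 2 * real T / (real n)\<^sup>2) *
               (3 * \<beta> * (\<integral>S. (norm (W1 - WS S))\<^sup>2 \<partial>PiM {..<n} (\<lambda>_. D))
                + real T * (\<integral>S. emp_risk n f S (WS S) \<partial>PiM {..<n} (\<lambda>_. D)))"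
  assumes D: "prob_space D"
    and n: "n > 0"
    and T: "T \<ge> 1"
    and beta: "\<beta> > 0"
    and nonneg: "\<And>w z. z \<in> space D \<Longrightarrow> f w z \<ge> 0"
    and grad: "\<And>w z. z \<in> space D \<Longrightarrow> ((\<lambda>v. f v z) has_derivative (\<lambda>h. g w z \<bullet> h)) (at w)"
    and convex: "\<And>z. z \<in> space D \<Longrightarrow> convex_on UNIV (\<lambda>w. f w z)"
    and smooth: "\<And>w u z. z \<in> space D \<Longrightarrow> norm (g w z - g u z) \<le> \<beta> * norm (w - u)"
    and integ_f: "\<And>w. integrable D (f w)"
    and wstar: "\<And>w. pop_risk D f wstar \<le> pop_risk D f w"
    and WS: "\<And>S w. S \<in> space Smeas \<Longrightarrow> emp_risk n f S (WS S) \<le> emp_risk n f S w"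
    and integ1: "integrable Smeas (\<lambda>S. pop_risk D f (A S))"
    and integ2: "integrable Smeas (\<lambda>S. emp_risk n f S (A S))"
    and integ3: "integrable Smeas (\<lambda>S. emp_risk n f S (WS S))"
    and integ4: "integrable Smeas (\<lambda>S. (norm (W1 - WS S))\<^sup>2)"
  shows "\<bar>(\<integral>S. pop_risk D f (A S) - emp_risk n f S (A S) \<partial>Smeas)\<bar> \<le> B \<and>
         (\<integral>S. pop_risk D f (A S) \<partial>Smeas) - pop_risk D f wstar
           \<le> B + 3 * \<beta> * (\<integral>S. (norm (W1 - WS S))\<^sup>2 \<partial>Smeas) / real T"
  proof -
  interpret fl: full f g \<beta> n D W1 WS T
  proof (intro full.intro msetting.intro full_axioms.intro msetting_axioms.intro)
    show "setting f g \<beta> n (space D)" by unfold_locales (fact n beta nonneg grad convex smooth)+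
  qed (fact D integ_f T WS[unfolded Smeas_def] integ1[unfolded Smeas_def A_def] integ2[unfolded Smeas_def A_def] integ3[unfolded Smeas_def] integ4[unfolded Smeas_def])+
  note m = fl.main[of wstar]
  show ?thesis unfolding Smeas_def A_def B_def by (rule m)
qed

end
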